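(* Let $\lambda$ be a polynomial $\mathfrak{gl}_{m|n}$ weight, $a\in\{0,1,\dots,m\}$, $b\in\{0,1,\dots,n\}$, and \[\boldsymbol A=(\lambda_m+\lambda_{m+1}<\lambda_{m-1}+\lambda_{m+1}+1<\dots<\lambda_{m-a+1}+\lambda_{m+1}+a-1),\] \[\boldsymbol B=(0<\lambda_{m+1}-\lambda_{m+2}+1<\dots<\lambda_{m+1}-\lambda_{m+b}+b-1)\] (i.e. $\boldsymbol A=\{\lambda_{m-k+1}+\lambda_{m+1}+k-1\}_{k=1}^a$, $\boldsymbol B=\{\lambda_{m+1}-\lambda_{m+k}+k-1\}_{k=1}^b$). Then the dominant of the partition $\boldsymbol A\sqcup\boldsymbol B$ is: (1) if $b\le\lambda_m$: $(0<\lambda_{m+1}-\lambda_{m+2}+1<\dots<\lambda_{m+1}-\lambda_{m+b}+b-1<\lambda_m+\lambda_{m+1}<\dots<\lambda_{m-a+1}+\lambda_{m+1}+a-1)$; (2) if $\lambda_{m-j+1}<b\le\lambda_{m-j}$ for some $1\le j\le a-1$: $(0<\lambda_{m+1}-\lambda_{m+2}+1<\dots<\lambda_{m+1}-\lambda_{m+b}+b-1<\lambda_{m+1}+b<\lambda_{m+1}+b+1<\dots<\lambda_{m+1}+b+j-1<\lambda_{m-j}+\lambda_{m+1}+j<\dots<\lambda_{m-a+1}+\lambda_{m+1}+a-1)$; (3) if $\lambda_{m-a+1}<b$: $(0<\lambda_{m+1}-\lambda_{m+2}+1<\dots<\lambda_{m+1}-\lambda_{m+b}+b-1<\lambda_{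m+1}+b<\lambda_{m+1}+b+1<\dots<\lambda_{m+1}+b+a-1)$.
   Context: A polynomial $\mathfrak{gl}_{m|n}$ weight is $\lambda=(\lambda_1,\dots,\lambda_{m+n})\in\mathbb{Z}^{m+n}_{\ge0}$ with $\lambda_1\ge\dots\ge\lambda_m$, $\lambda_{m+1}\ge\dots\ge\lambda_{m+n}$, and $\lambda_{m+k}=0$ whenever $k>\lambda_m$. A partition with $r$ parts is a weakly increasing sequence $\boldsymbol a=(a_1\le\dots\le a_r)$ of nonnegative integers; a finite multiset of nonnegative integers is identified with the partition obtained by sorting it, and $\sqcup$ denotes multiset union. $\boldsymbol b$ dominates $\boldsymbol a$ (both with $r$ parts) if $b_i\ge a_i$ for all $i$. The dominant $\bar{\boldsymbol a}$ of $\boldsymbol a$ is the unique partition with $r$ distinct parts which dominates $\boldsymbol a$ and is dominated by every partition with $r$ distinct parts dominating $\boldsymbol a$. *)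

theory Defs
  imports Main
begin

text \<open>A weight lam is given 1-indexed as a function nat => nat (only the values
  lam 1, ..., lam (m+n) matter).\<close>
definition poly_weight :: "nat \<Rightarrow> nat \<Rightarrow> (nat \<Rightarrow> nat) \<Rightarrow> bool" where
  "poly_weight m n lam \<longleftrightarrow>
     (\<forall>i. 1 \<le> i \<and> i < m \<longrightarrow> lam (i+1) \<le> lam i) \<and>
     (\<forall>k. 1 \<le> k \<and> k < n \<longrightarrow> lam (m+k+1) \<le> lam (m+k)) \<and>
     (\<forall>k. 1 \<le> k \<and> k \<le> n \<and> lam m < k \<longrightarrow> lam (m+k) = 0)"

definition is_partition :: "nat list \<Rightarrow> bool" where
  "is_partition a \<longleftrightarrow> sorted a"

definition distinct_partition :: "nat list \<Rightarrow> bool" where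
  "distinct_partition a \<longleftrightarrow> sorted_wrt (<) a"

definition part_union :: "nat list \<Rightarrow> nat list \<Rightarrow> nat list" where
  "part_union a b = sort (a @ b)"

definition dominates :: "nat list \<Rightarrow> nat list \<Rightarrow> bool" where
  "dominates b a \<longleftrightarrow> length b = length a \<and> (\<forall>i < length a. a ! i \<le> b ! i)"

definition dominant :: "nat list \<Rightarrow> nat list" where
  "dominant a = (THE d. distinct_partition d \<and> dominates d a \<and>
      (\<forall>e. distinct_partition e \<and> dominates e a \<longrightarrow> dominates e d))"

end

theory Submission imports Defs begin

lemma len_filter_sort: "length (filter P (sort xs)) = length (filter P (xs::nat list))"
  by (simp add: filter_sort)

lemma len_filter_take_le: "length (filter P (take k xs)) \<le> length (filter P xs)"
proof -
  have "xs = take k xs @ drop k xs" by simp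
  then have "length (filter P xs) = length (filter P (take k xs)) + length (filter P (drop k xs))"
    by (metis filter_append length_append)
  then show ?thesis by simp
qed

lemma sort_lb:
  fixes x :: "nat list"
  assumes "p < length x" and "length (filter (\<lambda>y. y < v) x) \<le> p"
  shows "v \<le> sort x ! p"
proof (rule ccontr)
  assume "\<not> v \<le> sort x ! p"
  then have lt: "sort x ! p < v" by simp
  have srt: "sorted (sort x)" by simp
  have "\<forall>y\<in>set (take (Suc p) (sort x)). y < v"
  proof
    fix y assume "y \<in> set (take (Suc p) (sort x))"
    then obtain q where q: "q < length (take (Suc p) (sort x))" "y = take (Suc p) (sort x) ! q"
      by (metis in_set_conv_nth)
    then have "q \<le> p" "y = sort x ! q" using assms by auto
    then have "y \<le> sort x ! p" using srt assms by (simp add: sorted_nth_mono)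
    then show "y < v" using lt by simp
  qed
  then have "filter (\<lambda>y. y < v) (take (Suc p) (sort x)) = take (Suc p) (sort x)"
    by (simp add: filter_id_conv)
  then have "Suc p \<le> length (filter (\<lambda>y. y < v) (sort x))"
    using len_filter_take_le[of "\<lambda>y. y < v" "Suc p" "sort x"] assms(1) by simp
  then show False using assms(2) len_filter_sort by simp
qed

lemma sort_ub:
  fixes x :: "nat list"
  assumes "i < length x" and "i < length (filter (\<lambda>y. y \<le> w) x)"
  shows "sort x ! i \<le> w"
proof (rule ccontr)
  assume "\<not> sort x ! i \<le> w"
  then have gt: "w < sort x ! i" by simp
  have srt: "sorted (sort x)" by simp
  have "\<forall>y\<in>set (drop i (sort x)). \<not> y \<le> w"
  proof
    fix y assume "y \<in> set (drop i (sort x))"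
    then obtain q where q: "q < length (drop i (sort x))" "y = drop i (sort x) ! q"
      by (metis in_set_conv_nth)
    then have "y = sort x ! (i + q)" "i + q < length x" using assms by auto
    then have "sort x ! i \<le> y" using srt by (simp add: sorted_nth_mono)
    then show "\<not> y \<le> w" using gt by simp
  qed
  then have e: "filter (\<lambda>y. y \<le> w) (drop i (sort x)) = []"
    by (simp add: filter_empty_conv)
  have "sort x = take i (sort x) @ drop i (sort x)" by simp
  then have "length (filter (\<lambda>y. y \<le> w) (sort x)) = length (filter (\<lambda>y. y \<le> w) (take i (sort x)))"
    using e by (metis append_Nil2 filter_append)
  also have "\<dots> \<le> i" by (metis length_filter_le length_take min.bounded_iff nle_le)
  finally show False using assms(2) len_filter_sort by simp
qed

lemma strict_gap:
  fixes e :: "nat list"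
  assumes "sorted_wrt (<) e" "p \<le> i" "i < length e"
  shows "e ! p + (i - p) \<le> e ! i"
  using assms(2,3)
proof (induction i)
  case 0 then show ?case by simp
next
  case (Suc i)
  show ?case
  proof (cases "p = Suc i")
    case True then show ?thesis by simp
  next
    case False
    then have "p \<le> i" using Suc by simp
    then have "e ! p + (i - p) \<le> e ! i" using Suc by simp
    moreover have "e ! i < e ! Suc i" using assms(1) Suc.prems
      by (simp add: sorted_wrt_iff_nth_less)
    ultimately show ?thesis using \<open>p \<le> i\<close> by simp
  qed
qed

lemma strict_from_succ:
  fixes D :: "nat \<Rightarrow> nat"
  assumes "\<And>i. Suc i < N \<Longrightarrow> D i < D (Suc i)"
  shows "sorted_wrt (<) (map D [0..<N])"
proof -
  have "D i < D j" if "i < j" "j < N" for i j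
    using that
  proof (induction j)
    case 0 then show ?case by simp
  next
    case (Suc j)
    then show ?case using assms[of j]
      by (cases "i = j") (auto)
  qed
  then show ?thesis by (simp add: sorted_wrt_iff_nth_less)
qed

lemma dominant_crit:
  fixes x :: "nat list" and D :: "nat \<Rightarrow> nat"
  assumes len: "length x = N"
    and inc: "\<And>i. Suc i < N \<Longrightarrow> D i < D (Suc i)"
    and up: "\<And>i. i < N \<Longrightarrow> i < length (filter (\<lambda>y. y \<le> D i) x)"
    and low: "\<And>i. i < N \<Longrightarrow> \<exists>p v. p \<le> i \<and> length (filter (\<lambda>y. y < v) x) \<le> p \<and> D i \<le> v + (i - p)"
  shows "dominant (sort x) = map D [0..<N]"
proof -
  let ?d = "map D [0..<N]"
  have P1: "distinct_partition ?d" unfolding distinct_partition_def using strict_from_succ inc by blast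
  have P2: "dominates ?d (sort x)" unfolding dominates_def
    using len sort_ub up by auto
  have P3: "dominates e ?d" if "distinct_partition e" "dominates e (sort x)" for e
  proof -
    have le: "length e = N" using that len by (simp add: dominates_def)
    have "D i \<le> e ! i" if "i < N" for i
    proof -
      obtain p v where pv: "p \<le> i" "length (filter (\<lambda>y. y < v) x) \<le> p" "D i \<le> v + (i - p)"
        using low \<open>i < N\<close> by blast
      have "v \<le> sort x ! p" using sort_lb pv len \<open>i < N\<close> by simp
      also have "\<dots> \<le> e ! p" using \<open>dominates e (sort x)\<close> pv \<open>i < N\<close> len
        by (simp add: dominates_def)
      finally have "v + (i - p) \<le> e ! p + (i - p)" by simp
      also have "\<dots> \<le> e ! i" using strict_gap \<open>distinct_partition e\<close> pv le \<open>i < N\<close>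
        by (simp add: distinct_partition_def)
      finally show ?thesis using pv by simp
    qed
    then show ?thesis using le by (simp add: dominates_def)
  qed
  show ?thesis unfolding dominant_def
  proof (rule the_equality)
    show "distinct_partition ?d \<and> dominates ?d (sort x) \<and>
      (\<forall>e. distinct_partition e \<and> dominates e (sort x) \<longrightarrow> dominates e ?d)"
      using P1 P2 P3 by blast
  next
    fix d assume H: "distinct_partition d \<and> dominates d (sort x) \<and>
      (\<forall>e. distinct_partition e \<and> dominates e (sort x) \<longrightarrow> dominates e d)"
    then have "dominates d ?d" using P3 by blast
    moreover have "dominates ?d d" using H P1 P2 by blast
    ultimately show "d = ?d" unfolding dominates_def
      by (metis nth_equalityI order_antisym)
  qed
qed

lemma cnt_card: "length (filter P (map f [1..<N+1])) = card {k. 1 \<le> k \<and> k \<le> N \<and> P (f k)}"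
proof -
  have "length (filter P (map f [1..<N+1])) = length (filter (P \<circ> f) [1..<N+1])"
    by (simp add: length_filter_map)
  also have "\<dots> = card ({k. (P \<circ> f) k} \<inter> set [1..<N+1])"
    by (simp add: distinct_length_filter)
  also have "{k. (P \<circ> f) k} \<inter> set [1..<N+1] = {k. 1 \<le> k \<and> k \<le> N \<and> P (f k)}" by auto
  finally show ?thesis .
qed

lemma cnt_le:
  assumes "\<And>k. 1 \<le> k \<Longrightarrow> k \<le> N \<Longrightarrow> P (f k) \<Longrightarrow> k \<le> r"
  shows "length (filter P (map f [1..<N+1])) \<le> r"
proof -
  have "{k. 1 \<le> k \<and> k \<le> N \<and> P (f k)} \<subseteq> {1..r}" using assms by auto
  then have "card {k. 1 \<le> k \<and> k \<le> N \<and> P (f k)} \<le> card {1..r}"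
    by (intro card_mono) auto
  then show ?thesis unfolding cnt_card by simp
qed

lemma cnt_ge:
  assumes "\<And>k. 1 \<le> k \<Longrightarrow> k \<le> r \<Longrightarrow> P (f k)" "r \<le> N"
  shows "r \<le> length (filter P (map f [1..<N+1]))"
proof -
  have "{1..r} \<subseteq> {k. 1 \<le> k \<and> k \<le> N \<and> P (f k)}" using assms by auto
  then have "card {1..r} \<le> card {k. 1 \<le> k \<and> k \<le> N \<and> P (f k)}"
    by (intro card_mono) auto
  then show ?thesis unfolding cnt_card by simp
qed

declare upt_Suc[simp del]

context
  fixes a b j L c :: nat and fA fB :: "nat \<Rightarrow> nat"
  assumes J: "j \<le> a"
    and B1: "\<And>k. 1 \<le> k \<Longrightarrow> k \<le> b \<Longrightarrow> fB k \<le> L + k - 1"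
    and B2: "\<And>k. c < k \<Longrightarrow> k \<le> b \<Longrightarrow> fB k = L + k - 1"
    and B3: "\<And>k1 k2. 1 \<le> k1 \<Longrightarrow> k1 < k2 \<Longrightarrow> k2 \<le> b \<Longrightarrow> fB k1 < fB k2"
    and A2: "\<And>k. 1 \<le> k \<Longrightarrow> k \<le> a \<Longrightarrow> L + c + k - 1 \<le> fA k"
    and A3: "\<And>k1 k2. 1 \<le> k1 \<Longrightarrow> k1 < k2 \<Longrightarrow> k2 \<le> a \<Longrightarrow> fA k1 < fA k2"
    and A4: "\<And>k. 1 \<le> k \<Longrightarrow> k \<le> j \<Longrightarrow> fA k < L + b + k - 1"
    and A5: "\<And>k. j < k \<Longrightarrow> k \<le> a \<Longrightarrow> L + b + k - 1 \<le> fA k"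
begin

definition DD :: "nat \<Rightarrow> nat" where
  "DD i = (if i < b then fB (i+1) else if i < b + j then L + i else fA (i - b + 1))"

lemma c_lt_b: "1 \<le> j \<Longrightarrow> c < b"
  using A2[of 1] A4[of 1] J by simp

lemma core_eq: "map fB [1..<b+1] @ map (\<lambda>i. L + b + i) [0..<j] @ map fA [j+1..<a+1] = map DD [0..<b+a]"
proof (rule nth_equalityI)
  show "length (map fB [1..<b+1] @ map (\<lambda>i. L + b + i) [0..<j] @ map fA [j+1..<a+1]) = length (map DD [0..<b+a])"
    using J by simp
next
  fix i assume "i < length (map fB [1..<b+1] @ map (\<lambda>i. L + b + i) [0..<j] @ map fA [j+1..<a+1])"
  then have i: "i < b + a" using J by simp
  consider "i < b" | "b \<le> i \<and> i < b + j" | "b + j \<le> i" by linarith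
  then show "(map fB [1..<b+1] @ map (\<lambda>i. L + b + i) [0..<j] @ map fA [j+1..<a+1]) ! i = map DD [0..<b+a] ! i"
  proof cases
    case 1 then show ?thesis using i by (auto simp: nth_append DD_def)
  next
    case 2 then show ?thesis using i by (auto simp: nth_append DD_def)
  next
    case 3 then show ?thesis using i J by (auto simp: nth_append DD_def)
  qed
qed

lemma core_inc: "Suc i < b + a \<Longrightarrow> DD i < DD (Suc i)"
proof -
  assume si: "Suc i < b + a"
  consider "Suc i < b" | "Suc i = b" | "b \<le> i \<and> Suc i < b + j" | "b \<le> i \<and> Suc i = b + j" | "b + j \<le> i"
    by linarith
  then show ?thesis
  proof cases
    case 1 then show ?thesis using B3[of "i+1" "i+2"] by (simp add: DD_def)
  next
    case 2
    then have "fB (i+1) \<le> L + b - 1" using B1[of "i+1"] by simp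
    moreover have "j = 0 \<Longrightarrow> L + b \<le> fA 1" using A5[of 1] si 2 by simp
    ultimately show ?thesis using 2 by (auto simp: DD_def)
  next
    case 3 then show ?thesis by (simp add: DD_def)
  next
    case 4
    then have "L + b + (j+1) - 1 \<le> fA (j+1)" using A5[of "j+1"] si by simp
    then show ?thesis using 4 by (auto simp: DD_def)
  next
    case 5 then show ?thesis using A3[of "i - b + 1" "i - b + 2"] si by (simp add: DD_def Suc_diff_le)
  qed
qed

lemma core_up: "i < b + a \<Longrightarrow> i < length (filter (\<lambda>y. y \<le> DD i) (map fA [1..<a+1] @ map fB [1..<b+1]))"
proof -
  assume i: "i < b + a"
  consider "i < b" | "b \<le> i \<and> i < b + j" | "b + j \<le> i" by linarith
  then show ?thesis
  proof cases
    case 1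
    have "i + 1 \<le> length (filter (\<lambda>y. y \<le> DD i) (map fB [1..<b+1]))"
    proof (rule cnt_ge)
      fix k assume "1 \<le> k" "k \<le> i + 1"
      then show "fB k \<le> DD i" using 1 B3[of k "i+1"] by (cases "k = i+1") (auto simp: DD_def)
    qed (use 1 in simp)
    then show ?thesis by simp
  next
    case 2
    have "b \<le> length (filter (\<lambda>y. y \<le> DD i) (map fB [1..<b+1]))"
    proof (rule cnt_ge)
      fix k assume "1 \<le> k" "k \<le> b"
      then show "fB k \<le> DD i" using 2 B1[of k] by (auto simp: DD_def)
    qed simp
    moreover have "i - b + 1 \<le> length (filter (\<lambda>y. y \<le> DD i) (map fA [1..<a+1]))"
    proof (rule cnt_ge)
      fix k assume "1 \<le> k" "k \<le> i - b + 1"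
      then have kj: "k \<le> j" using 2 by linarith
      then have "fA k < L + b + k - 1" using A4[of k] \<open>1 \<le> k\<close> by simp
      moreover have "DD i = L + i" using 2 by (simp add: DD_def)
      ultimately show "fA k \<le> DD i" using 2 \<open>k \<le> i - b + 1\<close> by linarith
    qed (use 2 J in linarith)
    ultimately show ?thesis using 2 by simp
  next
    case 3
    have "b \<le> length (filter (\<lambda>y. y \<le> DD i) (map fB [1..<b+1]))"
    proof (rule cnt_ge)
      fix k assume "1 \<le> k" "k \<le> b"
      have "L + b + (i - b + 1) - 1 \<le> fA (i - b + 1)" using A5[of "i - b + 1"] 3 i by linarith
      moreover have "fB k \<le> L + k - 1" using B1[of k] \<open>1 \<le> k\<close> \<open>k \<le> b\<close> by simp
      moreover have "DD i = fA (i - b + 1)" using 3 by (simp add: DD_def)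
      ultimately show "fB k \<le> DD i" using 3 \<open>k \<le> b\<close> by linarith
    qed simp
    moreover have "i - b + 1 \<le> length (filter (\<lambda>y. y \<le> DD i) (map fA [1..<a+1]))"
    proof (rule cnt_ge)
      fix k assume "1 \<le> k" "k \<le> i - b + 1"
      moreover have "i - b + 1 \<le> a" using 3 i by linarith
      ultimately show "fA k \<le> DD i" using 3 A3[of k "i - b + 1"]
        by (cases "k = i - b + 1") (auto simp: DD_def)
    qed (use 3 i in simp)
    ultimately show ?thesis using 3 by simp
  qed
qed

lemma core_low: "i < b + a \<Longrightarrow> \<exists>p v. p \<le> i \<and> length (filter (\<lambda>y. y < v) (map fA [1..<a+1] @ map fB [1..<b+1])) \<le> p \<and> DD i \<le> v + (i - p)"
proof -
  assume i: "i < b + a"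
  have cA: "length (filter (\<lambda>y. y < L + c) (map fA [1..<a+1])) \<le> 0"
  proof (rule cnt_le)
    fix k assume "1 \<le> k" "k \<le> a" "fA k < L + c"
    then show "k \<le> 0" using A2[of k] by simp
  qed
  have cB: "length (filter (\<lambda>y. y < L + c) (map fB [1..<b+1])) \<le> c"
  proof (rule cnt_le)
    fix k assume "1 \<le> k" "k \<le> b" "fB k < L + c"
    then show "k \<le> c" using B2[of k] by (cases "c < k") auto
  qed
  have run: "\<exists>p v. p \<le> i \<and> length (filter (\<lambda>y. y < v) (map fA [1..<a+1] @ map fB [1..<b+1])) \<le> p \<and> DD i \<le> v + (i - p)"
    if "c \<le> i" "DD i = L + i"
    using cA cB that by (intro exI[of _ c] exI[of _ "L + c"]) simp
  consider "i < b \<and> i < c" | "i < b \<and> c \<le> i" | "b \<le> i \<and> i < b + j" | "b + j \<le> i" by linarith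
  then show ?thesis
  proof cases
    case 1
    have "length (filter (\<lambda>y. y < fB (i+1)) (map fA [1..<a+1])) \<le> 0"
    proof (rule cnt_le)
      fix k assume "1 \<le> k" "k \<le> a" "fA k < fB (i+1)"
      then show "k \<le> 0" using A2[of k] B1[of "i+1"] 1 by linarith
    qed
    moreover have "length (filter (\<lambda>y. y < fB (i+1)) (map fB [1..<b+1])) \<le> i"
    proof (rule cnt_le)
      fix k assume "1 \<le> k" "k \<le> b" "fB k < fB (i+1)"
      note kk = this
      show "k \<le> i"
      proof (rule ccontr)
        assume "\<not> k \<le> i"
        then consider "k = i + 1" | "i + 1 < k" by linarith
        then show False using B3[of "i+1" k] kk by cases auto
      qed
    qed
    ultimately show ?thesis using 1
      by (intro exI[of _ i] exI[of _ "fB (i+1)"]) (simp add: DD_def)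
  next
    case 2
    then have "DD i = L + i" using B2[of "i+1"] by (simp add: DD_def)
    then show ?thesis using run 2 by simp
  next
    case 3
    then have "DD i = L + i" by (simp add: DD_def)
    moreover have "c \<le> i" using c_lt_b 3 by (cases "1 \<le> j") auto
    ultimately show ?thesis using run by simp
  next
    case 4
    define k0 where "k0 = i - b + 1"
    have k0: "1 \<le> k0" "k0 \<le> a" "j < k0" using 4 i by (auto simp: k0_def)
    have "length (filter (\<lambda>y. y < fA k0) (map fA [1..<a+1])) \<le> k0 - 1"
    proof (rule cnt_le)
      fix k assume "1 \<le> k" "k \<le> a" "fA k < fA k0"
      note kk = this
      show "k \<le> k0 - 1"
      proof (rule ccontr)
        assume "\<not> k \<le> k0 - 1"
        then consider "k = k0" | "k0 < k" using k0 by linarith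
        then show False using A3[of k0 k] kk k0 by cases auto
      qed
    qed
    moreover have "length (filter (\<lambda>y. y < fA k0) (map fB [1..<b+1])) \<le> b"
      by (rule cnt_le) simp
    ultimately show ?thesis using 4 k0
      by (intro exI[of _ i] exI[of _ "fA k0"]) (simp add: DD_def k0_def)
  qed
qed

lemma core: "dominant (part_union (map fA [1..<a+1]) (map fB [1..<b+1])) =
    map fB [1..<b+1] @ map (\<lambda>i. L + b + i) [0..<j] @ map fA [j+1..<a+1]"
  unfolding core_eq part_union_def
  by (rule dominant_crit[OF _ core_inc core_up core_low]) simp_all

end


lemma pw_mono1:
  assumes "poly_weight m n lam" "1 \<le> i" "i \<le> k" "k \<le> m"
  shows "lam k \<le> lam i"
  using assms(3,4)
proof (induction k rule: dec_induct)
  case base then show ?case by simp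
next
  case (step k)
  then have "lam (k+1) \<le> lam k" using assms(1,2) unfolding poly_weight_def by simp
  then show ?case using step by simp
qed

lemma pw_mono2:
  assumes "poly_weight m n lam" "1 \<le> i" "i \<le> k" "k \<le> n"
  shows "lam (m + k) \<le> lam (m + i)"
  using assms(3,4)
proof (induction k rule: dec_induct)
  case base then show ?case by simp
next
  case (step k)
  then have "lam (m + k + 1) \<le> lam (m + k)" using assms(1,2) unfolding poly_weight_def by simp
  then show ?case using step by simp
qed

lemma core_lam:
  fixes m n a b j :: nat and lam :: "nat \<Rightarrow> nat"
  assumes "1 \<le> m" and "1 \<le> n" and pw: "poly_weight m n lam" and "a \<le> m" and "b \<le> n"
    and J: "j \<le> a"
    and H4: "\<And>k. 1 \<le> k \<Longrightarrow> k \<le> j \<Longrightarrow> lam (m - k + 1) < b"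
    and H5: "\<And>k. j < k \<Longrightarrow> k \<le> a \<Longrightarrow> b \<le> lam (m - k + 1)"
  shows "dominant (part_union (map (\<lambda>k. lam (m - k + 1) + lam (m + 1) + k - 1) [1..<a+1])
             (map (\<lambda>k. lam (m + 1) - lam (m + k) + k - 1) [1..<b+1])) =
    map (\<lambda>k. lam (m + 1) - lam (m + k) + k - 1) [1..<b+1] @ map (\<lambda>i. lam (m + 1) + b + i) [0..<j]
      @ map (\<lambda>k. lam (m - k + 1) + lam (m + 1) + k - 1) [j+1..<a+1]"
proof (rule core[where c = "lam m"])
  show "j \<le> a" by (rule J)
next
  fix k assume "1 \<le> k" "k \<le> b"
  then show "lam (m + 1) - lam (m + k) + k - 1 \<le> lam (m + 1) + k - 1" by simp
next
  fix k assume "lam m < k" "k \<le> b"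
  then have "lam (m + k) = 0" using pw \<open>b \<le> n\<close> unfolding poly_weight_def by auto
  then show "lam (m + 1) - lam (m + k) + k - 1 = lam (m + 1) + k - 1" by simp
next
  fix k1 k2 :: nat assume "1 \<le> k1" "k1 < k2" "k2 \<le> b"
  then have "lam (m + k2) \<le> lam (m + k1)" using pw_mono2[OF pw, of k1 k2] \<open>b \<le> n\<close> by simp
  then show "lam (m + 1) - lam (m + k1) + k1 - 1 < lam (m + 1) - lam (m + k2) + k2 - 1"
    using \<open>1 \<le> k1\<close> \<open>k1 < k2\<close> by linarith
next
  fix k assume "1 \<le> k" "k \<le> a"
  then have "lam m \<le> lam (m - k + 1)" using pw_mono1[OF pw, of "m - k + 1" m] \<open>a \<le> m\<close> by simp
  then show "lam (m + 1) + lam m + k - 1 \<le> lam (m - k + 1) + lam (m + 1) + k - 1" by simp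
next
  fix k1 k2 :: nat assume "1 \<le> k1" "k1 < k2" "k2 \<le> a"
  then have "lam (m - k1 + 1) \<le> lam (m - k2 + 1)" using pw_mono1[OF pw, of "m - k2 + 1" "m - k1 + 1"] \<open>a \<le> m\<close> by simp
  then show "lam (m - k1 + 1) + lam (m + 1) + k1 - 1 < lam (m - k2 + 1) + lam (m + 1) + k2 - 1"
    using \<open>1 \<le> k1\<close> \<open>k1 < k2\<close> by linarith
next
  fix k assume "1 \<le> k" "k \<le> j"
  then have "lam (m - k + 1) < b" by (rule H4)
  then show "lam (m - k + 1) + lam (m + 1) + k - 1 < lam (m + 1) + b + k - 1" using \<open>1 \<le> k\<close> by linarith
next
  fix k assume "j < k" "k \<le> a"
  then have "b \<le> lam (m - k + 1)" by (rule H5)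
  then show "lam (m + 1) + b + k - 1 \<le> lam (m - k + 1) + lam (m + 1) + k - 1" by linarith
qed

theorem lemma6p3:
  fixes m n a b :: nat and lam :: "nat \<Rightarrow> nat"
  assumes "1 \<le> m" and "1 \<le> n"
    and "poly_weight m n lam"
    and "a \<le> m" and "b \<le> n"
  defines "A \<equiv> map (\<lambda>k. lam (m - k + 1) + lam (m + 1) + k - 1) [1..<a+1]"
    and "B \<equiv> map (\<lambda>k. lam (m + 1) - lam (m + k) + k - 1) [1..<b+1]"
  shows "(b \<le> lam m \<longrightarrow> dominant (part_union A B) = B @ A)
    \<and> (\<forall>j. 1 \<le> j \<and> j \<le> a - 1 \<and> lam (m - j + 1) < b \<and> b \<le> lam (m - j) \<longrightarrow>
          dominant (part_union A B) =
            B @ map (\<lambda>i. lam (m + 1) + b + i) [0..<j]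
              @ map (\<lambda>k. lam (m - k + 1) + lam (m + 1) + k - 1) [j+1..<a+1])
    \<and> (lam (m - a + 1) < b \<longrightarrow>
          dominant (part_union A B) = B @ map (\<lambda>i. lam (m + 1) + b + i) [0..<a])"
proof (intro conjI impI allI)
  assume hb: "b \<le> lam m"
  have "dominant (part_union A B) = B @ map (\<lambda>i. lam (m + 1) + b + i) [0..<0]
      @ map (\<lambda>k. lam (m - k + 1) + lam (m + 1) + k - 1) [0+1..<a+1]"
    unfolding A_def B_def
  proof (rule core_lam[OF assms(1-5)])
    fix k assume "0 < k" "k \<le> a"
    then have "lam m \<le> lam (m - k + 1)" using pw_mono1[OF assms(3), of "m - k + 1" m] \<open>a \<le> m\<close> by simp
    then show "b \<le> lam (m - k + 1)" using hb by simp
  qed auto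
  then show "dominant (part_union A B) = B @ A" by (simp add: A_def)
next
  fix j assume hj: "1 \<le> j \<and> j \<le> a - 1 \<and> lam (m - j + 1) < b \<and> b \<le> lam (m - j)"
  show "dominant (part_union A B) = B @ map (\<lambda>i. lam (m + 1) + b + i) [0..<j]
              @ map (\<lambda>k. lam (m - k + 1) + lam (m + 1) + k - 1) [j+1..<a+1]"
    unfolding A_def B_def
  proof (rule core_lam[OF assms(1-5)])
    show "j \<le> a" using hj by linarith
  next
    fix k assume "1 \<le> k" "k \<le> j"
    moreover have "j \<le> m" using hj \<open>a \<le> m\<close> by linarith
    ultimately have "1 \<le> m - j + 1" "m - j + 1 \<le> m - k + 1" "m - k + 1 \<le> m" by linarith+
    then have "lam (m - k + 1) \<le> lam (m - j + 1)"
      using pw_mono1[OF assms(3), of "m - j + 1" "m - k + 1"] by blast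
    then show "lam (m - k + 1) < b" using hj by simp
  next
    fix k assume "j < k" "k \<le> a"
    then have "1 \<le> m - k + 1" "m - k + 1 \<le> m - j" "m - j \<le> m" using \<open>a \<le> m\<close> by linarith+
    then have "lam (m - j) \<le> lam (m - k + 1)"
      using pw_mono1[OF assms(3), of "m - k + 1" "m - j"] by blast
    then show "b \<le> lam (m - k + 1)" using hj by simp
  qed
next
  assume ha: "lam (m - a + 1) < b"
  have "dominant (part_union A B) = B @ map (\<lambda>i. lam (m + 1) + b + i) [0..<a]
      @ map (\<lambda>k. lam (m - k + 1) + lam (m + 1) + k - 1) [a+1..<a+1]"
    unfolding A_def B_def
  proof (rule core_lam[OF assms(1-5)])
    fix k assume "1 \<le> k" "k \<le> a"
    then have "1 \<le> m - a + 1" "m - a + 1 \<le> m - k + 1" "m - k + 1 \<le> m" using \<open>a \<le> m\<close> by linarith+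
    then have "lam (m - k + 1) \<le> lam (m - a + 1)"
      using pw_mono1[OF assms(3), of "m - a + 1" "m - k + 1"] by blast
    then show "lam (m - k + 1) < b" using ha by simp
  qed auto
  then show "dominant (part_union A B) = B @ map (\<lambda>i. lam (m + 1) + b + i) [0..<a]" by simp
qed

end
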